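(* Let $W\ge2$, $B>0$, $\delta>0$ and $1\le k\le L$. Let $F_k,G_k\in\Phi_k(L,W,S,B)$ have weights and biases with $\|\mathcal W_F^{(l)}-\mathcal W_G^{(l)}\|_{\infty,\infty}\le\delta$ and $\|b_F^{(l)}-b_G^{(l)}\|_\infty\le\delta$ for all $1\le l\le k$. Then $$\sup_{x\in\Omega}\|J[F_k](x)-J[G_k](x)\|_\infty\le\delta\,W^{\frac{3^{k-1}-1}{2}}(B\vee d)^{\frac{5\cdot3^{k-1}-1}{2}}\,2^{\frac{3^k-1}{2}-k+1}\,3^{2k-2}.$$ In particular, for $k=L$, $$\sup_{x\in\Omega}\Big|\|\nabla F_L(x)\|-\|\nabla G_L(x)\|\Big|\le\delta\,W^{\frac{3^{L-1}-1}{2}}(B\vee d)^{\frac{5\cdot3^{L-1}-1}{2}}\,2^{\frac{3^L-1}{2}-L+1}\,3^{2L-2}.$$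
   Context: $\Omega=[0,1]^d$, $B\vee d=\max\{B,d\}$. $\eta_3(t)=\max\{t,0\}^3$ applied componentwise. Given weights $\mathcal W^{(1)}\in\mathbb R^{W\times d}$, $\mathcal W^{(l)}\in\mathbb R^{W\times W}$ ($1<l<L$), $\mathcal W^{(L)}\in\mathbb R^{1\times W}$ and biases $b^{(l)}$ of matching sizes, all entries of absolute value at most $B$ and with at most $S$ nonzero entries in total, define $F_1(x)=\mathcal W^{(1)}x+b^{(1)}$ and $F_k(x)=\mathcal W^{(k)}\eta_3(F_{k-1}(x))+b^{(k)}$ for $2\le k\le L$; $\Phi_k(L,W,S,B)$ is the set of all such $F_k$. $J[F_k](x)$ is the Jacobian of $F_k$ at $x$; for a matrix $A$, $\|A\|_\infty$ is the maximum absolute row sum and $\|A\|_{\infty,\infty}$ the maximum absolute entry; $\|\cdot\|_\infty$ on vectors is the maximum absolute entry and $\|\cdot\|$ the Euclidean norm. *)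

theory Defs
  imports "HOL-Analysis.Analysis"
begin

definition eta3 :: "real \<Rightarrow> real" where
  "eta3 t = (max t 0) ^ 3"

text \<open>Layer dimensions of a network of depth L, width W, input dimension d
  (layers indexed 1..L). Layer l maps R^(in_dim l) to R^(out_dim l).\<close>
definition in_dim :: "nat \<Rightarrow> nat \<Rightarrow> nat \<Rightarrow> nat" where
  "in_dim W d l = (if l = 1 then d else W)"

definition out_dim :: "nat \<Rightarrow> nat \<Rightarrow> nat \<Rightarrow> nat" where
  "out_dim L W l = (if l = L then 1 else W)"

text \<open>Parameters: Wt l i j is the (i,j) entry of the weight matrix of layer l,
  b l i the i-th entry of the bias of layer l (i, j starting at 0).\<close>
definition in_Phi ::
  "nat \<Rightarrow> nat \<Rightarrow> nat \<Rightarrow> nat \<Rightarrow> real \<Rightarrow> (nat \<Rightarrow> nat \<Rightarrow> nat \<Rightarrow> real) \<Rightarrow> (nat \<Rightarrow> nat \<Rightarrow> real) \<Rightarrow> bool" where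
  "in_Phi d L W S B Wt b \<longleftrightarrow>
     (\<forall>l\<in>{1..L}. \<forall>i<out_dim L W l. \<forall>j<in_dim W d l. \<bar>Wt l i j\<bar> \<le> B) \<and>
     (\<forall>l\<in>{1..L}. \<forall>i<out_dim L W l. \<bar>b l i\<bar> \<le> B) \<and>
     card {(l,i,j). l \<in> {1..L} \<and> i < out_dim L W l \<and> j < in_dim W d l \<and> Wt l i j \<noteq> 0}
       + card {(l,i). l \<in> {1..L} \<and> i < out_dim L W l \<and> b l i \<noteq> 0} \<le> S"

text \<open>Network evaluation: net d W Wt b k x i is the i-th component of F_k(x),
  where x : R^d is represented as a function nat => real (only x 0..x (d-1) used).\<close>
fun net :: "nat \<Rightarrow> nat \<Rightarrow> (nat \<Rightarrow> nat \<Rightarrow> nat \<Rightarrow> real) \<Rightarrow> (nat \<Rightarrow> nat \<Rightarrow> real) \<Rightarrow> nat \<Rightarrow> (nat \<Rightarrow> real) \<Rightarrow> nat \<Rightarrow> real" where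
  "net d W Wt b 0 x i = 0"
| "net d W Wt b (Suc 0) x i = (\<Sum>j<d. Wt 1 i j * x j) + b 1 i"
| "net d W Wt b (Suc (Suc k)) x i =
     (\<Sum>j<W. Wt (Suc (Suc k)) i j * eta3 (net d W Wt b (Suc k) x j)) + b (Suc (Suc k)) i"

definition jac :: "((nat \<Rightarrow> real) \<Rightarrow> nat \<Rightarrow> real) \<Rightarrow> (nat \<Rightarrow> real) \<Rightarrow> nat \<Rightarrow> nat \<Rightarrow> real" where
  "jac F x i j = deriv (\<lambda>t. F (x(j := x j + t)) i) 0"

definition mat_inf_norm :: "nat \<Rightarrow> nat \<Rightarrow> (nat \<Rightarrow> nat \<Rightarrow> real) \<Rightarrow> real" where
  "mat_inf_norm m n A = Max ((\<lambda>i. \<Sum>j<n. \<bar>A i j\<bar>) ` {..<m})"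

definition Omega :: "nat \<Rightarrow> (nat \<Rightarrow> real) set" where
  "Omega d = {x. \<forall>j<d. 0 \<le> x j \<and> x j \<le> 1}"

end

theory Submission
  imports Defs "HOL-Analysis.Analysis"
begin


definition eta3d :: "real \<Rightarrow> real" where "eta3d t = 3 * (max t 0)^2"

lemma eta3_quot_bound: "\<bar>eta3 x / x\<bar> \<le> x\<^sup>2"
proof (cases "x \<ge> 0")
  case True
  then have "eta3 x = x^3" by (simp add: eta3_def)
  then show ?thesis using True by (cases "x = 0") (simp_all add: power3_eq_cube power2_eq_square)
next
  case False
  then have "eta3 x = 0" by (simp add: eta3_def)
  then show ?thesis by simp
qed

lemma DERIV_eta3: "DERIV eta3 t :> eta3d t"
proof -
  consider "t = 0" | "t > 0" | "t < 0" by linarith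
  then show ?thesis
  proof cases
    case 1
    have "((\<lambda>h. (eta3 (0+h) - eta3 0)/h) \<longlongrightarrow> 0) (at 0)"
    proof (rule Lim_null_comparison[where g="\<lambda>h. h^2"])
      have "eta3 0 = 0" by (simp add: eta3_def)
      then show "\<forall>\<^sub>F x in at 0. norm ((eta3 (0 + x) - eta3 0) / x) \<le> x\<^sup>2"
        using eta3_quot_bound by simp
      show "((\<lambda>h::real. h^2) \<longlongrightarrow> 0) (at 0)"
        using tendsto_power[OF tendsto_ident_at[of "0::real" UNIV], of 2] by simp
    qed
    then show ?thesis using 1 by (simp add: DERIV_def eta3d_def)
  next
    case 2
    have "\<forall>\<^sub>F y in nhds t. y \<in> {0<..}"
      using eventually_nhds_in_open[of "{0<..}" t] 2 by simp
    then have ev: "\<forall>\<^sub>F y in nhds t. (\<lambda>y. y^3) y = eta3 y"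
      by (rule eventually_mono) (simp add: eta3_def)
    have "DERIV (\<lambda>y. y^3) t :> 3 * t^2"
      by (auto intro!: derivative_eq_intros)
    then show ?thesis using DERIV_cong_ev[OF refl ev, of "3*t^2" "eta3d t"] 2
      by (simp add: eta3d_def)
  next
    case 3
    have "\<forall>\<^sub>F y in nhds t. y \<in> {..<0}"
      using eventually_nhds_in_open[of "{..<0}" t] 3 by simp
    then have ev: "\<forall>\<^sub>F y in nhds t. (\<lambda>y. 0) y = eta3 y"
      by (rule eventually_mono) (simp add: eta3_def)
    have "DERIV (\<lambda>y. 0) t :> 0" by simp
    then show ?thesis using DERIV_cong_ev[OF refl ev, of 0 "eta3d t"] 3
      by (simp add: eta3d_def)
  qed
qed



fun jacR :: "nat \<Rightarrow> nat \<Rightarrow> (nat \<Rightarrow> nat \<Rightarrow> nat \<Rightarrow> real) \<Rightarrow> (nat \<Rightarrow> nat \<Rightarrow> real) \<Rightarrow> nat \<Rightarrow> (nat \<Rightarrow> real) \<Rightarrow> nat \<Rightarrow> nat \<Rightarrow> real" where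
  "jacR d W Wt b 0 y i j = 0"
| "jacR d W Wt b (Suc 0) y i j = (if j < d then Wt 1 i j else 0)"
| "jacR d W Wt b (Suc (Suc k)) y i j =
     (\<Sum>l<W. Wt (Suc (Suc k)) i l * eta3d (net d W Wt b (Suc k) y l) * jacR d W Wt b (Suc k) y l j)"

lemma DERIV_upd: "DERIV (\<lambda>t. (y(j:=t)) m) s :> (if m = j then 1 else 0)"
  by (cases "m = j") auto

lemma DERIV_net:
  "\<forall>i. DERIV (\<lambda>t. net d W Wt b k (y(j:=t)) i) s :> jacR d W Wt b k (y(j:=s)) i j"
proof (induction k rule: nat_less_induct)
  case (1 k)
  show ?case
  proof (cases k)
    case 0
    then show ?thesis by simp
  next
    case (Suc k')
    show ?thesis
    proof (cases k')
      case 0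
      show ?thesis
      proof
        fix i
        have "DERIV (\<lambda>t. (\<Sum>m<d. Wt 1 i m * (y(j:=t)) m) + b 1 i) s :>
               (\<Sum>m<d. Wt 1 i m * (if m = j then 1 else 0)) + 0"
          by (intro DERIV_add DERIV_sum DERIV_cmult DERIV_upd DERIV_const)
        moreover have "(\<Sum>m<d. Wt 1 i m * (if m = j then 1 else 0)) = (if j < d then Wt 1 i j else 0)"
          by (simp add: if_distrib[of "\<lambda>x. _ * x"] sum.delta cong: if_cong)
        ultimately show "DERIV (\<lambda>t. net d W Wt b k (y(j:=t)) i) s :> jacR d W Wt b k (y(j:=s)) i j"
          using Suc 0 by simp
      qed
    next
      case (Suc k'')
      have IH: "\<forall>i. DERIV (\<lambda>t. net d W Wt b (Suc k'') (y(j:=t)) i) s :> jacR d W Wt b (Suc k'') (y(j:=s)) i j"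
        using 1[rule_format, of "Suc k''"] \<open>k = Suc k'\<close> Suc by blast
      show ?thesis
      proof
        fix i
        have "DERIV (\<lambda>t. (\<Sum>l<W. Wt (Suc (Suc k'')) i l * eta3 (net d W Wt b (Suc k'') (y(j:=t)) l)) + b (Suc (Suc k'')) i) s :>
               (\<Sum>l<W. Wt (Suc (Suc k'')) i l * (eta3d (net d W Wt b (Suc k'') (y(j:=s)) l) * jacR d W Wt b (Suc k'') (y(j:=s)) l j)) + 0"
          by (intro DERIV_add DERIV_sum DERIV_cmult DERIV_const DERIV_chain2[OF DERIV_eta3] IH[rule_format])
        then show "DERIV (\<lambda>t. net d W Wt b k (y(j:=t)) i) s :> jacR d W Wt b k (y(j:=s)) i j"
          using \<open>k = Suc k'\<close> Suc by (simp add: mult.assoc)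
      qed
    qed
  qed
qed

lemma jac_net: "jac (net d W Wt b k) x i j = jacR d W Wt b k x i j"
proof -
  have "DERIV (\<lambda>t. net d W Wt b k (x(j:=x j + t)) i) 0 :> jacR d W Wt b k (x(j:=x j + 0)) i j * 1"
    by (rule DERIV_chain2[where g="\<lambda>t. x j + t", OF DERIV_net[rule_format]])
       (auto intro!: derivative_eq_intros)
  then show ?thesis unfolding jac_def by (simp add: DERIV_imp_deriv)
qed



lemma maxpos: "0 \<le> max (t::real) 0" "max t 0 \<le> \<bar>t\<bar>" "\<bar>max (u::real) 0 - max v 0\<bar> \<le> \<bar>u - v\<bar>"
    apply simp
   apply simp
  apply (smt (verit) max_def)
  done

lemma eta3_bound: assumes "\<bar>u\<bar> \<le> a" shows "\<bar>eta3 u\<bar> \<le> a^3"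
proof -
  have "\<bar>eta3 u\<bar> = (max u 0)^3" by (simp add: eta3_def)
  also have "\<dots> \<le> a^3" using maxpos[of u] assms by (intro power_mono) auto
  finally show ?thesis .
qed

lemma eta3d_bound: assumes "\<bar>u\<bar> \<le> a" shows "\<bar>eta3d u\<bar> \<le> 3*a^2"
proof -
  have "\<bar>eta3d u\<bar> = 3*(max u 0)^2" by (simp add: eta3d_def)
  also have "\<dots> \<le> 3*a^2" using maxpos[of u] assms by (intro mult_left_mono power_mono) auto
  finally show ?thesis .
qed

lemma eta3_lip: assumes "\<bar>u\<bar> \<le> a" "\<bar>v\<bar> \<le> a" shows "\<bar>eta3 u - eta3 v\<bar> \<le> 3*a^2*\<bar>u - v\<bar>"
proof -
  define p where "p = max u 0"
  define q where "q = max v 0"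
  have p: "0 \<le> p" "p \<le> a" and q: "0 \<le> q" "q \<le> a" and pq: "\<bar>p - q\<bar> \<le> \<bar>u - v\<bar>"
    using maxpos[of u] maxpos[of v] maxpos(3)[of u v] assms unfolding p_def q_def by auto
  have "eta3 u - eta3 v = (p - q) * (p*p + p*q + q*q)"
    by (simp add: eta3_def p_def q_def power3_eq_cube algebra_simps)
  then have "\<bar>eta3 u - eta3 v\<bar> = \<bar>p - q\<bar> * (p*p + p*q + q*q)"
    using p q by (simp add: abs_mult)
  also have "\<dots> \<le> \<bar>u - v\<bar> * (a*a + a*a + a*a)"
    using p q pq by (intro mult_mono add_mono) (auto intro: mult_mono)
  finally show ?thesis by (simp add: power2_eq_square algebra_simps)
qed

lemma eta3d_lip: assumes "\<bar>u\<bar> \<le> a" "\<bar>v\<bar> \<le> a" shows "\<bar>eta3d u - eta3d v\<bar> \<le> 6*a*\<bar>u - v\<bar>"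
proof -
  define p where "p = max u 0"
  define q where "q = max v 0"
  have p: "0 \<le> p" "p \<le> a" and q: "0 \<le> q" "q \<le> a" and pq: "\<bar>p - q\<bar> \<le> \<bar>u - v\<bar>"
    using maxpos[of u] maxpos[of v] maxpos(3)[of u v] assms unfolding p_def q_def by auto
  have "eta3d u - eta3d v = 3 * ((p - q) * (p + q))"
    by (simp add: eta3d_def p_def q_def power2_eq_square algebra_simps)
  then have "\<bar>eta3d u - eta3d v\<bar> = 3 * (\<bar>p - q\<bar> * (p + q))"
    using p q by (simp only: abs_mult)
  also have "\<dots> \<le> 3 * (\<bar>u - v\<bar> * (a + a))"
    using p q pq by (intro mult_left_mono mult_mono) auto
  finally show ?thesis by (simp add: algebra_simps)
qed

lemma sum_le_const: "(\<And>l. l < W \<Longrightarrow> f l \<le> c) \<Longrightarrow> (\<Sum>l<W. f l) \<le> real W * c"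
proof -
  assume "\<And>l. l < W \<Longrightarrow> f l \<le> c"
  then have "(\<Sum>l<W. f l) \<le> (\<Sum>l<W. c)" by (intro sum_mono) auto
  then show ?thesis by simp
qed

lemma sum_abs_const: "(\<And>l. l < W \<Longrightarrow> \<bar>f l\<bar> \<le> c) \<Longrightarrow> \<bar>\<Sum>l<W. f l\<bar> \<le> real W * c"
  by (rule order_trans[OF sum_abs sum_le_const]) auto

lemma mono3: "0 \<le> (x::real) \<Longrightarrow> x \<le> x' \<Longrightarrow> 0 \<le> y \<Longrightarrow> y \<le> y' \<Longrightarrow> 0 \<le> z \<Longrightarrow> z \<le> z' \<Longrightarrow> x*y*z \<le> x'*y'*z'"
  by (meson mult_mono order_trans mult_nonneg_nonneg)

lemma term3: "\<bar>(p1::real)*q1*r1 - p2*q2*r2\<bar> \<le> \<bar>p1-p2\<bar>*\<bar>q1\<bar>*\<bar>r1\<bar> + \<bar>p2\<bar>*\<bar>q1-q2\<bar>*\<bar>r1\<bar> + \<bar>p2\<bar>*\<bar>q2\<bar>*\<bar>r1-r2\<bar>"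
proof -
  have "p1*q1*r1 - p2*q2*r2 = (p1-p2)*q1*r1 + p2*(q1-q2)*r1 + p2*q2*(r1-r2)"
    by (simp add: algebra_simps)
  then have "\<bar>(p1::real)*q1*r1 - p2*q2*r2\<bar> = \<bar>(p1-p2)*q1*r1 + p2*(q1-q2)*r1 + p2*q2*(r1-r2)\<bar>" by simp
  also have "\<dots> \<le> \<bar>(p1-p2)*q1*r1\<bar> + \<bar>p2*(q1-q2)*r1\<bar> + \<bar>p2*q2*(r1-r2)\<bar>"
    by (rule order_trans[OF abs_triangle_ineq add_right_mono[OF abs_triangle_ineq]])
  finally show ?thesis by (simp add: abs_mult)
qed

lemma layer_val:
  assumes "\<And>l. l < W \<Longrightarrow> \<bar>w l\<bar> \<le> B" "\<bar>c\<bar> \<le> B" "\<And>l. l < W \<Longrightarrow> \<bar>u l\<bar> \<le> a"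
  shows "\<bar>(\<Sum>l<W. w l * eta3 (u l)) + c\<bar> \<le> real W * (B * a^3) + B"
proof -
  have "\<bar>\<Sum>l<W. w l * eta3 (u l)\<bar> \<le> real W * (B * a^3)"
  proof (rule sum_abs_const)
    fix l assume l: "l < W"
    have "\<bar>w l * eta3 (u l)\<bar> = \<bar>w l\<bar> * \<bar>eta3 (u l)\<bar>" by (simp add: abs_mult)
    also have "\<dots> \<le> B * a^3" using assms(1)[OF l] eta3_bound[OF assms(3)[OF l]]
      by (intro mult_mono) auto
    finally show "\<bar>w l * eta3 (u l)\<bar> \<le> B * a^3" .
  qed
  then show ?thesis using assms(2) by linarith
qed

lemma layer_diff:
  assumes "\<And>l. l < W \<Longrightarrow> \<bar>wG l\<bar> \<le> B" "\<And>l. l < W \<Longrightarrow> \<bar>wF l - wG l\<bar> \<le> \<delta>"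
    "\<bar>cF - cG\<bar> \<le> \<delta>" "\<And>l. l < W \<Longrightarrow> \<bar>uF l\<bar> \<le> a" "\<And>l. l < W \<Longrightarrow> \<bar>uG l\<bar> \<le> a"
    "\<And>l. l < W \<Longrightarrow> \<bar>uF l - uG l\<bar> \<le> e"
  shows "\<bar>((\<Sum>l<W. wF l * eta3 (uF l)) + cF) - ((\<Sum>l<W. wG l * eta3 (uG l)) + cG)\<bar>
          \<le> real W * (\<delta> * a^3 + B * (3*a^2*e)) + \<delta>"
proof -
  have "\<bar>\<Sum>l<W. wF l * eta3 (uF l) - wG l * eta3 (uG l)\<bar> \<le> real W * (\<delta> * a^3 + B * (3*a^2*e))"
  proof (rule sum_abs_const)
    fix l assume l: "l < W"
    have "wF l * eta3 (uF l) - wG l * eta3 (uG l) = (wF l - wG l) * eta3 (uF l) + wG l * (eta3 (uF l) - eta3 (uG l))"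
      by (simp add: algebra_simps)
    then have "\<bar>wF l * eta3 (uF l) - wG l * eta3 (uG l)\<bar> \<le> \<bar>(wF l - wG l) * eta3 (uF l)\<bar> + \<bar>wG l * (eta3 (uF l) - eta3 (uG l))\<bar>"
      by (simp only: abs_triangle_ineq)
    then have "\<bar>wF l * eta3 (uF l) - wG l * eta3 (uG l)\<bar> \<le> \<bar>wF l - wG l\<bar> * \<bar>eta3 (uF l)\<bar> + \<bar>wG l\<bar> * \<bar>eta3 (uF l) - eta3 (uG l)\<bar>"
      by (simp only: abs_mult)
    also have "\<dots> \<le> \<delta> * a^3 + B * (3*a^2*e)"
    proof (intro add_mono mult_mono)
      show "\<bar>eta3 (uF l)\<bar> \<le> a^3" using eta3_bound[OF assms(4)[OF l]] .
      have "\<bar>eta3 (uF l) - eta3 (uG l)\<bar> \<le> 3*a^2*\<bar>uF l - uG l\<bar>" using eta3_lip[OF assms(4,5)[OF l]] .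
      also have "\<dots> \<le> 3*a^2*e" using assms(6)[OF l] by (intro mult_left_mono) auto
      finally show "\<bar>eta3 (uF l) - eta3 (uG l)\<bar> \<le> 3*a^2*e" .
      show "0 \<le> \<delta>" using assms(2)[OF l] by linarith
      show "0 \<le> B" using assms(1)[OF l] by linarith
      show "\<bar>wF l - wG l\<bar> \<le> \<delta>" by (rule assms(2)[OF l])
      show "\<bar>wG l\<bar> \<le> B" by (rule assms(1)[OF l])
    qed simp_all
    finally show "\<bar>wF l * eta3 (uF l) - wG l * eta3 (uG l)\<bar> \<le> \<delta> * a^3 + B * (3*a^2*e)" .
  qed
  moreover have "((\<Sum>l<W. wF l * eta3 (uF l)) + cF) - ((\<Sum>l<W. wG l * eta3 (uG l)) + cG)
     = (\<Sum>l<W. wF l * eta3 (uF l) - wG l * eta3 (uG l)) + (cF - cG)"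
    by (simp add: sum_subtractf)
  ultimately show ?thesis using assms(3) abs_triangle_ineq[of "\<Sum>l<W. wF l * eta3 (uF l) - wG l * eta3 (uG l)" "cF - cG"] by linarith
qed

lemma layer_jac:
  assumes "\<And>l. l < W \<Longrightarrow> \<bar>w l\<bar> \<le> B" "\<And>l. l < W \<Longrightarrow> \<bar>u l\<bar> \<le> a"
    "\<And>l. l < W \<Longrightarrow> (\<Sum>j<d. \<bar>J l j\<bar>) \<le> \<beta>"
  shows "(\<Sum>j<d. \<bar>\<Sum>l<W. w l * eta3d (u l) * J l j\<bar>) \<le> real W * (B * (3*a^2) * \<beta>)"
proof -
  have "(\<Sum>j<d. \<bar>\<Sum>l<W. w l * eta3d (u l) * J l j\<bar>) \<le> (\<Sum>j<d. \<Sum>l<W. \<bar>w l * eta3d (u l) * J l j\<bar>)"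
    by (intro sum_mono sum_abs)
  also have "\<dots> = (\<Sum>l<W. \<bar>w l\<bar> * \<bar>eta3d (u l)\<bar> * (\<Sum>j<d. \<bar>J l j\<bar>))"
    by (subst sum.swap) (simp add: abs_mult sum_distrib_left)
  also have "\<dots> \<le> real W * (B * (3*a^2) * \<beta>)"
  proof (rule sum_le_const)
    fix l assume l: "l < W"
    show "\<bar>w l\<bar> * \<bar>eta3d (u l)\<bar> * (\<Sum>j<d. \<bar>J l j\<bar>) \<le> B * (3*a^2) * \<beta>"
      using assms(1,3)[OF l] eta3d_bound[OF assms(2)[OF l]]
      by (intro mono3) (simp_all add: sum_nonneg)
  qed
  finally show ?thesis .
qed

lemma layer_jacdiff:
  assumes "\<And>l. l < W \<Longrightarrow> \<bar>wG l\<bar> \<le> B" "\<And>l. l < W \<Longrightarrow> \<bar>wF l - wG l\<bar> \<le> \<delta>"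
    "\<And>l. l < W \<Longrightarrow> \<bar>uF l\<bar> \<le> a" "\<And>l. l < W \<Longrightarrow> \<bar>uG l\<bar> \<le> a"
    "\<And>l. l < W \<Longrightarrow> \<bar>uF l - uG l\<bar> \<le> e"
    "\<And>l. l < W \<Longrightarrow> (\<Sum>j<d. \<bar>JF l j\<bar>) \<le> \<beta>"
    "\<And>l. l < W \<Longrightarrow> (\<Sum>j<d. \<bar>JF l j - JG l j\<bar>) \<le> g"
  shows "(\<Sum>j<d. \<bar>(\<Sum>l<W. wF l * eta3d (uF l) * JF l j) - (\<Sum>l<W. wG l * eta3d (uG l) * JG l j)\<bar>)
     \<le> real W * (\<delta> * (3*a^2) * \<beta> + B * (6*a*e) * \<beta> + B * (3*a^2) * g)"
proof -
  have "(\<Sum>j<d. \<bar>(\<Sum>l<W. wF l * eta3d (uF l) * JF l j) - (\<Sum>l<W. wG l * eta3d (uG l) * JG l j)\<bar>)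
     = (\<Sum>j<d. \<bar>\<Sum>l<W. wF l * eta3d (uF l) * JF l j - wG l * eta3d (uG l) * JG l j\<bar>)"
    by (simp add: sum_subtractf)
  also have "\<dots> \<le> (\<Sum>j<d. \<Sum>l<W. \<bar>wF l * eta3d (uF l) * JF l j - wG l * eta3d (uG l) * JG l j\<bar>)"
    by (intro sum_mono sum_abs)
  also have "\<dots> \<le> (\<Sum>j<d. \<Sum>l<W. \<bar>wF l - wG l\<bar>*\<bar>eta3d (uF l)\<bar>*\<bar>JF l j\<bar> + \<bar>wG l\<bar>*\<bar>eta3d (uF l) - eta3d (uG l)\<bar>*\<bar>JF l j\<bar> + \<bar>wG l\<bar>*\<bar>eta3d (uG l)\<bar>*\<bar>JF l j - JG l j\<bar>)"
    by (intro sum_mono term3)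
  also have "\<dots> = (\<Sum>l<W. \<bar>wF l - wG l\<bar>*\<bar>eta3d (uF l)\<bar>*(\<Sum>j<d. \<bar>JF l j\<bar>) + \<bar>wG l\<bar>*\<bar>eta3d (uF l) - eta3d (uG l)\<bar>*(\<Sum>j<d. \<bar>JF l j\<bar>) + \<bar>wG l\<bar>*\<bar>eta3d (uG l)\<bar>*(\<Sum>j<d. \<bar>JF l j - JG l j\<bar>))"
    by (subst sum.swap) (simp add: sum.distrib sum_distrib_left)
  also have "\<dots> \<le> real W * (\<delta> * (3*a^2) * \<beta> + B * (6*a*e) * \<beta> + B * (3*a^2) * g)"
  proof (rule sum_le_const)
    fix l assume l: "l < W"
    have d0: "0 \<le> \<delta>" using assms(2)[OF l] by linarith
    have B0: "0 \<le> B" using assms(1)[OF l] by linarith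
    have s1: "0 \<le> (\<Sum>j<d. \<bar>JF l j\<bar>)" by (simp add: sum_nonneg)
    have e1: "\<bar>eta3d (uF l)\<bar> \<le> 3*a^2" using eta3d_bound[OF assms(3)[OF l]] .
    have e2: "\<bar>eta3d (uG l)\<bar> \<le> 3*a^2" using eta3d_bound[OF assms(4)[OF l]] .
    have e3: "\<bar>eta3d (uF l) - eta3d (uG l)\<bar> \<le> 6*a*e"
    proof -
      have "\<bar>eta3d (uF l) - eta3d (uG l)\<bar> \<le> 6*a*\<bar>uF l - uG l\<bar>" using eta3d_lip[OF assms(3,4)[OF l]] .
      also have "\<dots> \<le> 6*a*e" using assms(3,5)[OF l] by (intro mult_left_mono) (auto intro: order_trans[OF abs_ge_zero])
      finally show ?thesis .
    qed
    show "\<bar>wF l - wG l\<bar>*\<bar>eta3d (uF l)\<bar>*(\<Sum>j<d. \<bar>JF l j\<bar>) + \<bar>wG l\<bar>*\<bar>eta3d (uF l) - eta3d (uG l)\<bar>*(\<Sum>j<d. \<bar>JF l j\<bar>) + \<bar>wG l\<bar>*\<bar>eta3d (uG l)\<bar>*(\<Sum>j<d. \<bar>JF l j - JG l j\<bar>)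
        \<le> \<delta> * (3*a^2) * \<beta> + B * (6*a*e) * \<beta> + B * (3*a^2) * g"
      using assms(1,2,6,7)[OF l] e1 e2 e3 d0 B0 s1
      by (intro add_mono mono3) (simp_all add: sum_nonneg)
  qed
  finally show ?thesis .
qed



fun Pq :: "real \<Rightarrow> real \<Rightarrow> nat \<Rightarrow> real" where
  "Pq W M 0 = M^2"
| "Pq W M (Suc n) = W*M*(Pq W M n)^3"

fun al :: "nat \<Rightarrow> real" where
  "al 0 = 2"
| "al (Suc n) = 2*(al n)^3"

fun be :: "nat \<Rightarrow> real" where
  "be 0 = 1"
| "be (Suc n) = 3*(al n)^2*be n"

lemma ge1_mult: "1 \<le> (a::real) \<Longrightarrow> 1 \<le> b \<Longrightarrow> 1 \<le> a*b"
  using mult_mono[of 1 a 1 b] by simp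

lemma al_ge1: "1 \<le> al n"
proof (induction n)
  case 0 then show ?case by simp
next
  case (Suc n)
  have "1 \<le> al n ^ 3" using Suc by simp
  then show ?case by simp
qed

lemma be_ge1: "1 \<le> be n"
proof (induction n)
  case 0 then show ?case by simp
next
  case (Suc n)
  have "1 \<le> al n ^ 2" using al_ge1 by simp
  then have "1 \<le> 3 * al n ^ 2" by simp
  then show ?case using Suc by (simp add: ge1_mult)
qed

lemma Pq_ge1: assumes "1 \<le> W" "1 \<le> M" shows "1 \<le> Pq W M n"
proof (induction n)
  case 0 then show ?case using assms by simp
next
  case (Suc n)
  have "1 \<le> Pq W M n ^ 3" using Suc by simp
  then show ?case using assms by (simp add: ge1_mult)
qed

lemma S1:
  fixes W M B A X :: real
  assumes "1 \<le> W" "1 \<le> M" "0 \<le> B" "B \<le> M" "1 \<le> A" "1 \<le> X"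
  shows "W*(B*(A*X)^3) + B \<le> 2*A^3 * (W*M*X^3)"
proof -
  define K where "K = W*A^3*X^3"
  have K1: "1 \<le> K" unfolding K_def
    by (intro ge1_mult assms(1) one_le_power assms(5) assms(6))
  have e1: "W*(B*(A*X)^3) + B = K*B + B" unfolding K_def by (simp add: power_mult_distrib ring_distribs mult_ac)
  have e2: "2*A^3 * (W*M*X^3) = 2*(K*M)" unfolding K_def by (simp add: ring_distribs mult_ac)
  have f1: "K*B \<le> K*M" using K1 by (intro mult_left_mono assms(4)) simp
  have f2: "1*M \<le> K*M" using K1 assms(2) by (intro mult_right_mono) simp_all
  show ?thesis unfolding e1 e2 using f1 f2 assms(2,4) by linarith
qed

lemma S2:
  fixes W M B A X Bt :: real
  assumes "1 \<le> W" "1 \<le> M" "0 \<le> B" "B \<le> M" "1 \<le> A" "1 \<le> X" "1 \<le> Bt"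
  shows "W*(B*(3*(A*X)^2)*(Bt*X)) \<le> 3*A^2*Bt*(W*M*X^3)"
proof -
  define K where "K = 3*W*A^2*Bt*X^3"
  have K1: "1 \<le> K" unfolding K_def
    by (intro ge1_mult assms(1) one_le_power assms(5) assms(6) assms(7)) simp
  have e1: "W*(B*(3*(A*X)^2)*(Bt*X)) = K*B" unfolding K_def by (simp add: power_mult_distrib power2_eq_square power3_eq_cube ring_distribs mult_ac)
  have e2: "3*A^2*Bt*(W*M*X^3) = K*M" unfolding K_def by (simp add: ring_distribs mult_ac)
  have f1: "K*B \<le> K*M" using K1 by (intro mult_left_mono assms(4)) simp
  show ?thesis unfolding e1 e2 using f1 .
qed

lemma S3:
  fixes W M B A X y \<delta> :: real
  assumes "1 \<le> W" "1 \<le> M" "0 \<le> B" "B \<le> M" "1 \<le> A" "1 \<le> X" "1 \<le> y" "0 < \<delta>"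
  shows "W*(\<delta>*(A*X)^3 + B*(3*(A*X)^2*(\<delta>*(A*y)*X))) + \<delta> \<le> \<delta>*((2*A^3)*(3*y))*(W*M*X^3)"
proof -
  define K where "K = W*A^3*X^3"
  have K1: "1 \<le> K" unfolding K_def
    by (intro ge1_mult assms(1) one_le_power assms(5) assms(6))
  have e1: "W*(\<delta>*(A*X)^3 + B*(3*(A*X)^2*(\<delta>*(A*y)*X))) + \<delta> = \<delta>*(K + 3*(B*(K*y)) + 1)"
    unfolding K_def by (simp add: power_mult_distrib power2_eq_square power3_eq_cube ring_distribs mult_ac)
  have e2: "\<delta>*((2*A^3)*(3*y))*(W*M*X^3) = \<delta>*(6*(M*(K*y)))" unfolding K_def by (simp add: ring_distribs mult_ac)
  have Ky: "1 \<le> K*y" by (rule ge1_mult[OF K1 assms(7)])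
  have MKy: "1 \<le> M*(K*y)" by (rule ge1_mult[OF assms(2) Ky])
  have g1: "K*1 \<le> K*y" using K1 by (intro mult_left_mono assms(7)) simp
  have g2: "1*(K*y) \<le> M*(K*y)" using Ky by (intro mult_right_mono assms(2)) simp
  have f2: "B*(K*y) \<le> M*(K*y)" using Ky by (intro mult_right_mono assms(4)) simp
  have "K + 3*(B*(K*y)) + 1 \<le> 6*(M*(K*y))" using g1 g2 f2 MKy by linarith
  then show ?thesis unfolding e1 e2 using assms(8) by (rule mult_left_mono[OF _ less_imp_le])
qed

lemma S4:
  fixes W M B A X y \<delta> Bt :: real
  assumes "1 \<le> W" "1 \<le> M" "0 \<le> B" "B \<le> M" "1 \<le> A" "1 \<le> X" "1 \<le> y" "0 < \<delta>" "1 \<le> Bt"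
  shows "W*(\<delta>*(3*(A*X)^2)*(Bt*X) + B*(6*(A*X)*(\<delta>*(A*y)*X))*(Bt*X) + B*(3*(A*X)^2)*(\<delta>*(2*Bt*y)*X))
         \<le> \<delta>*(2*(3*A^2*Bt)*(3*y))*(W*M*X^3)"
proof -
  define K where "K = \<delta>*W*A^2*Bt*X^3"
  have K0: "0 \<le> K" unfolding K_def using assms(1,5,6,8,9)
    by (intro mult_nonneg_nonneg zero_le_power) simp_all
  have e1: "W*(\<delta>*(3*(A*X)^2)*(Bt*X) + B*(6*(A*X)*(\<delta>*(A*y)*X))*(Bt*X) + B*(3*(A*X)^2)*(\<delta>*(2*Bt*y)*X))
       = K*(3 + 12*(B*y))"
    unfolding K_def by (simp add: power_mult_distrib power2_eq_square power3_eq_cube ring_distribs mult_ac)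
  have e2: "\<delta>*(2*(3*A^2*Bt)*(3*y))*(W*M*X^3) = K*(18*(M*y))" unfolding K_def by (simp add: power2_eq_square ring_distribs mult_ac)
  have f1: "1 \<le> M*y" by (rule ge1_mult[OF assms(2,7)])
  have f2: "B*y \<le> M*y" using assms(7) by (intro mult_right_mono assms(4)) simp
  have "3 + 12*(B*y) \<le> 18*(M*y)" using f1 f2 by linarith
  then show ?thesis unfolding e1 e2 using K0 by (rule mult_left_mono)
qed

lemma s_rec: "(3^(Suc n) - 1) div 2 = 3 * ((3^n - 1) div 2) + (1::nat)"
proof -
  have "odd ((3::nat)^n)" by simp
  then obtain t where t: "(3::nat)^n = 2*t+1" by (metis oddE)
  have "(3::nat)^(Suc n) = 6*t + 3" using t by simp
  then show ?thesis using t by simp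
qed

lemma q_rec: "(5*3^(Suc n) - 1) div 2 = 3 * ((5*3^n - 1) div 2) + (1::nat)"
proof -
  have "odd ((3::nat)^n)" by simp
  then obtain t where t: "(3::nat)^n = 2*t+1" by (metis oddE)
  have "5*(3::nat)^(Suc n) = 30*t + 15" using t by simp
  moreover have "5*(3::nat)^n = 10*t + 5" using t by simp
  ultimately show ?thesis by simp
qed

lemma Pq_closed: "Pq W M n = W^((3^n - 1) div 2) * M^((5*3^n - 1) div 2)"
proof (induction n)
  case 0 then show ?case by simp
next
  case (Suc n)
  show ?case unfolding Pq.simps Suc s_rec q_rec
    by (simp add: power_add power_mult_distrib power_mult[symmetric] ring_distribs mult_ac)
qed

lemma al_closed: "al n = 2^((3^(Suc n) - 1) div 2)"
proof (induction n)
  case 0 then show ?case by simp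
next
  case (Suc n)
  show ?case unfolding al.simps Suc s_rec[of "Suc n"]
    by (simp add: power_add power_mult[symmetric] ring_distribs mult_ac)
qed

lemma pow_aux: "(2::real)^(3*m+1) = 2*(2^m)^2*2^m"
proof -
  have "(2::real)^(3*m+1) = 2^(m+m+m+1)" by (simp add: ring_distribs mult_ac)
  also have "\<dots> = 2*(2^m)^2*2^m" by (simp only: power_add power2_eq_square) simp
  finally show ?thesis .
qed

lemma pow_aux2: "3 * 2 * ((2::real)^m)^2 * (3^n * 2^m) = 3^(Suc n) * 2^(3*m+1)"
  unfolding pow_aux by (simp add: mult_ac)

lemma be_closed: "be n * 2^(Suc n) = 3^n * 2^((3^(Suc n) - 1) div 2)"
proof (induction n)
  case 0 then show ?case by simp
next
  case (Suc n)
  have "be (Suc n) * 2^(Suc (Suc n)) = 3 * 2 * (al n)^2 * (be n * 2^(Suc n))"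
    by (simp add: ring_distribs mult_ac)
  also have "\<dots> = 3 * 2 * (2^((3^(Suc n) - 1) div 2))^2 * (3^n * 2^((3^(Suc n) - 1) div 2))"
    unfolding Suc al_closed ..
  also have "\<dots> = 3^(Suc n) * 2^(3 * ((3^(Suc n) - 1) div 2) + 1)" by (rule pow_aux2)
  also have "\<dots> = 3^(Suc n) * 2^((3^(Suc (Suc n)) - 1) div 2)" by (simp only: s_rec[of "Suc n"])
  finally show ?case .
qed

lemma s_ge: "Suc n \<le> (3^(Suc n) - 1) div 2 + (1::nat)"
proof (induction n)
  case 0 then show ?case by simp
next
  case (Suc n)
  then show ?case unfolding s_rec[of "Suc n"] by simp
qed

lemma c_closed: "2 * be n * 3^n = (2::real)^((3^(Suc n) - 1) div 2 + 1 - Suc n) * 3^(2*Suc n - 2)"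
proof -
  define s where "s = (3^(Suc n) - 1) div (2::nat)"
  have ns: "n \<le> s" using s_ge[of n] unfolding s_def by simp
  define r where "r = s - n"
  have r: "s = n + r" using ns unfolding r_def by simp
  have sr: "s + 1 - Suc n = r" using r by simp
  have e2: "2*Suc n - 2 = n + n" by simp
  have "2 * be n * 3^n * 2^n = (be n * 2^(Suc n)) * 3^n" by (simp only: power_Suc mult_ac)
  also have "\<dots> = 3^n * 2^s * 3^n" unfolding be_closed s_def ..
  also have "\<dots> = 2^r * 3^(2*Suc n - 2) * 2^n"
    unfolding r e2 power_add by (simp only: mult_ac)
  finally have h: "2 * be n * 3^n * 2^n = 2^r * 3^(2*Suc n - 2) * (2::real)^n" .
  have nz: "(2::real)^n \<noteq> 0" by simp
  have "2 * be n * 3^n = (2::real)^r * 3^(2*Suc n - 2)"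
    using h by (simp only: mult_right_cancel[OF nz])
  then show ?thesis unfolding sr[symmetric] s_def .
qed

lemma l2_diff: "\<bar>sqrt (\<Sum>j<d. (a j)\<^sup>2) - sqrt (\<Sum>j<d. (b j)\<^sup>2)\<bar> \<le> (\<Sum>j<d. \<bar>a j - b j\<bar>)"
proof -
  have t1: "L2_set a {..<d} \<le> L2_set (\<lambda>j. a j - b j) {..<d} + L2_set b {..<d}"
    using L2_set_triangle_ineq[of "\<lambda>j. a j - b j" b "{..<d}"] by simp
  have t2: "L2_set b {..<d} \<le> L2_set (\<lambda>j. b j - a j) {..<d} + L2_set a {..<d}"
    using L2_set_triangle_ineq[of "\<lambda>j. b j - a j" a "{..<d}"] by simp
  have eq: "L2_set (\<lambda>j. b j - a j) {..<d} = L2_set (\<lambda>j. a j - b j) {..<d}"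
    unfolding L2_set_def by (simp add: power2_commute)
  have le: "L2_set (\<lambda>j. a j - b j) {..<d} \<le> (\<Sum>j<d. \<bar>a j - b j\<bar>)" by (rule L2_set_le_sum_abs)
  show ?thesis using t1 t2 eq le unfolding L2_set_def by linarith
qed



lemma base_ineq:
  fixes d B M \<delta> :: real
  assumes "1 \<le> M" "0 \<le> B" "B \<le> M" "0 \<le> d" "d \<le> M" "0 < \<delta>"
  shows "d*B + B \<le> 2*M^2" "d*B \<le> 1*M^2" "d*\<delta> + \<delta> \<le> \<delta>*(2*1)*M^2" "d*\<delta> \<le> \<delta>*(2*1*1)*M^2"
proof -
  have MM: "M \<le> M*M" using mult_left_mono[of 1 M M] assms(1) by linarith
  have dB: "d*B \<le> M*M" using assms by (intro mult_mono) auto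
  have dM: "d \<le> M*M" using MM assms(5) by linarith
  have sq: "M^2 = M*M" by (simp only: power2_eq_square)
  show "d*B + B \<le> 2*M^2" unfolding sq using dB MM assms(3) by linarith
  show "d*B \<le> 1*M^2" unfolding sq using dB by linarith
  have "d + 1 \<le> 2*(M*M)" using dM MM assms(1) by linarith
  then have "\<delta>*(d + 1) \<le> \<delta>*(2*(M*M))" using assms(6) by (intro mult_left_mono) auto
  then show "d*\<delta> + \<delta> \<le> \<delta>*(2*1)*M^2" unfolding sq by (simp only: ring_distribs mult_ac mult_1 mult_1_right)
  have "d \<le> 2*(M*M)" using dM MM assms(1) by linarith
  then have "\<delta>*d \<le> \<delta>*(2*(M*M))" using assms(6) by (intro mult_left_mono) auto
  then show "d*\<delta> \<le> \<delta>*(2*1*1)*M^2" unfolding sq by (simp only: mult_ac mult_1 mult_1_right)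
qed

lemma main_ind:
  fixes d L W S k :: nat and B \<delta> M :: real
    and WF WG :: "nat \<Rightarrow> nat \<Rightarrow> nat \<Rightarrow> real" and bF bG :: "nat \<Rightarrow> nat \<Rightarrow> real"
  assumes W1: "1 \<le> W" and Bpos: "B > 0" and dpos: "\<delta> > 0" and d1: "1 \<le> d"
    and Mdef: "M = max B (real d)" and kL: "k \<le> L"
    and F: "in_Phi d L W S B WF bF" and G: "in_Phi d L W S B WG bG"
    and dW: "\<forall>l\<in>{1..k}. \<forall>i<out_dim L W l. \<forall>j<in_dim W d l. \<bar>WF l i j - WG l i j\<bar> \<le> \<delta>"
    and db: "\<forall>l\<in>{1..k}. \<forall>i<out_dim L W l. \<bar>bF l i - bG l i\<bar> \<le> \<delta>"
  shows "Suc n \<le> k \<Longrightarrow> \<forall>x\<in>Omega d. \<forall>i<out_dim L W (Suc n).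
     \<bar>net d W WF bF (Suc n) x i\<bar> \<le> al n * Pq (real W) M n \<and>
     \<bar>net d W WG bG (Suc n) x i\<bar> \<le> al n * Pq (real W) M n \<and>
     (\<Sum>j<d. \<bar>jacR d W WF bF (Suc n) x i j\<bar>) \<le> be n * Pq (real W) M n \<and>
     (\<Sum>j<d. \<bar>jacR d W WG bG (Suc n) x i j\<bar>) \<le> be n * Pq (real W) M n \<and>
     \<bar>net d W WF bF (Suc n) x i - net d W WG bG (Suc n) x i\<bar> \<le> \<delta> * (al n * 3^n) * Pq (real W) M n \<and>
     (\<Sum>j<d. \<bar>jacR d W WF bF (Suc n) x i j - jacR d W WG bG (Suc n) x i j\<bar>) \<le> \<delta> * (2 * be n * 3^n) * Pq (real W) M n"
proof (induction n)
  case 0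
  have M1: "1 \<le> M" using Mdef d1 by simp
  have B0: "0 \<le> B" "B \<le> M" using Bpos Mdef by auto
  have dM: "real d \<le> M" using Mdef by simp
  show ?case
  proof (intro ballI allI impI)
    fix x i assume x: "x \<in> Omega d" and i: "i < out_dim L W (Suc 0)"
    have L1: "1 \<le> L" using 0 kL by simp
    have k1: "1 \<le> k" using 0 by simp
    have xb: "\<And>j. j < d \<Longrightarrow> \<bar>x j\<bar> \<le> 1" using x unfolding Omega_def by auto
    have wF: "\<And>j. j < d \<Longrightarrow> \<bar>WF 1 i j\<bar> \<le> B" using F L1 i unfolding in_Phi_def in_dim_def by auto
    have wG: "\<And>j. j < d \<Longrightarrow> \<bar>WG 1 i j\<bar> \<le> B" using G L1 i unfolding in_Phi_def in_dim_def by auto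
    have cF: "\<bar>bF 1 i\<bar> \<le> B" using F L1 i unfolding in_Phi_def by auto
    have cG: "\<bar>bG 1 i\<bar> \<le> B" using G L1 i unfolding in_Phi_def by auto
    have wD: "\<And>j. j < d \<Longrightarrow> \<bar>WF 1 i j - WG 1 i j\<bar> \<le> \<delta>" using dW k1 i unfolding in_dim_def by auto
    have cD: "\<bar>bF 1 i - bG 1 i\<bar> \<le> \<delta>" using db k1 i by auto
    have sF: "\<bar>\<Sum>j<d. WF 1 i j * x j\<bar> \<le> real d * B"
    proof (rule sum_abs_const)
      fix j assume "j < d"
      then show "\<bar>WF 1 i j * x j\<bar> \<le> B" using wF xb B0 unfolding abs_mult
        by (metis mult.right_neutral mult_mono abs_ge_zero)
    qed
    have sG: "\<bar>\<Sum>j<d. WG 1 i j * x j\<bar> \<le> real d * B"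
    proof (rule sum_abs_const)
      fix j assume "j < d"
      then show "\<bar>WG 1 i j * x j\<bar> \<le> B" using wG xb B0 unfolding abs_mult
        by (metis mult.right_neutral mult_mono abs_ge_zero)
    qed
    have sD: "\<bar>\<Sum>j<d. WF 1 i j * x j - WG 1 i j * x j\<bar> \<le> real d * \<delta>"
    proof (rule sum_abs_const)
      fix j assume "j < d"
      then show "\<bar>WF 1 i j * x j - WG 1 i j * x j\<bar> \<le> \<delta>" using wD xb dpos
        unfolding left_diff_distrib[symmetric] abs_mult
        by (metis mult.right_neutral mult_mono abs_ge_zero less_imp_le)
    qed
    have netF: "net d W WF bF (Suc 0) x i = (\<Sum>j<d. WF 1 i j * x j) + bF 1 i" by simp
    have netG: "net d W WG bG (Suc 0) x i = (\<Sum>j<d. WG 1 i j * x j) + bG 1 i" by simp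
    have jF: "(\<Sum>j<d. \<bar>jacR d W WF bF (Suc 0) x i j\<bar>) = (\<Sum>j<d. \<bar>WF 1 i j\<bar>)" by (intro sum.cong) auto
    have jG: "(\<Sum>j<d. \<bar>jacR d W WG bG (Suc 0) x i j\<bar>) = (\<Sum>j<d. \<bar>WG 1 i j\<bar>)" by (intro sum.cong) auto
    have jD: "(\<Sum>j<d. \<bar>jacR d W WF bF (Suc 0) x i j - jacR d W WG bG (Suc 0) x i j\<bar>) = (\<Sum>j<d. \<bar>WF 1 i j - WG 1 i j\<bar>)" by (intro sum.cong) auto
    have bi: "real d * B + B \<le> 2*M^2" "real d*B \<le> 1*M^2" "real d*\<delta> + \<delta> \<le> \<delta>*(2*1)*M^2" "real d*\<delta> \<le> \<delta>*(2*1*1)*M^2"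
      using base_ineq[OF M1 B0 _ dM dpos] by simp_all
    have r1: "\<bar>net d W WF bF (Suc 0) x i\<bar> \<le> al 0 * Pq (real W) M 0"
      unfolding netF al.simps(1) Pq.simps(1) using abs_triangle_ineq[of "\<Sum>j<d. WF 1 i j * x j" "bF 1 i"] sF cF bi(1) by linarith
    have r2: "\<bar>net d W WG bG (Suc 0) x i\<bar> \<le> al 0 * Pq (real W) M 0"
      unfolding netG al.simps(1) Pq.simps(1) using abs_triangle_ineq[of "\<Sum>j<d. WG 1 i j * x j" "bG 1 i"] sG cG bi(1) by linarith
    have r3: "(\<Sum>j<d. \<bar>jacR d W WF bF (Suc 0) x i j\<bar>) \<le> be 0 * Pq (real W) M 0"
      unfolding jF be.simps(1) Pq.simps(1) using sum_le_const[of d "\<lambda>j. \<bar>WF 1 i j\<bar>" B, OF wF] bi(2) by linarith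
    have r4: "(\<Sum>j<d. \<bar>jacR d W WG bG (Suc 0) x i j\<bar>) \<le> be 0 * Pq (real W) M 0"
      unfolding jG be.simps(1) Pq.simps(1) using sum_le_const[of d "\<lambda>j. \<bar>WG 1 i j\<bar>" B, OF wG] bi(2) by linarith
    have r5: "\<bar>net d W WF bF (Suc 0) x i - net d W WG bG (Suc 0) x i\<bar> \<le> \<delta> * (al 0 * 3^0) * Pq (real W) M 0"
    proof -
      have "net d W WF bF (Suc 0) x i - net d W WG bG (Suc 0) x i = (\<Sum>j<d. WF 1 i j * x j - WG 1 i j * x j) + (bF 1 i - bG 1 i)"
        unfolding netF netG by (simp add: sum_subtractf)
      then show ?thesis unfolding al.simps(1) power_0 Pq.simps(1)
        using abs_triangle_ineq[of "\<Sum>j<d. WF 1 i j * x j - WG 1 i j * x j" "bF 1 i - bG 1 i"] sD cD bi(3) by linarith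
    qed
    have r6: "(\<Sum>j<d. \<bar>jacR d W WF bF (Suc 0) x i j - jacR d W WG bG (Suc 0) x i j\<bar>) \<le> \<delta> * (2 * be 0 * 3^0) * Pq (real W) M 0"
      unfolding jD be.simps(1) power_0 Pq.simps(1) using sum_le_const[of d "\<lambda>j. \<bar>WF 1 i j - WG 1 i j\<bar>" \<delta>, OF wD] bi(4) by linarith
    show "\<bar>net d W WF bF (Suc 0) x i\<bar> \<le> al 0 * Pq (real W) M 0 \<and>
     \<bar>net d W WG bG (Suc 0) x i\<bar> \<le> al 0 * Pq (real W) M 0 \<and>
     (\<Sum>j<d. \<bar>jacR d W WF bF (Suc 0) x i j\<bar>) \<le> be 0 * Pq (real W) M 0 \<and>
     (\<Sum>j<d. \<bar>jacR d W WG bG (Suc 0) x i j\<bar>) \<le> be 0 * Pq (real W) M 0 \<and>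
     \<bar>net d W WF bF (Suc 0) x i - net d W WG bG (Suc 0) x i\<bar> \<le> \<delta> * (al 0 * 3^0) * Pq (real W) M 0 \<and>
     (\<Sum>j<d. \<bar>jacR d W WF bF (Suc 0) x i j - jacR d W WG bG (Suc 0) x i j\<bar>) \<le> \<delta> * (2 * be 0 * 3^0) * Pq (real W) M 0"
      using r1 r2 r3 r4 r5 r6 by blast
  qed
next
  case (Suc n)
  have M1: "1 \<le> M" using Mdef d1 by simp
  have B0: "0 \<le> B" "B \<le> M" using Bpos Mdef by auto
  have W1r: "1 \<le> real W" using W1 by simp
  have A1: "1 \<le> al n" by (rule al_ge1)
  have Bt1: "1 \<le> be n" by (rule be_ge1)
  have X1: "1 \<le> Pq (real W) M n" by (rule Pq_ge1[OF W1r M1])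
  have y1: "1 \<le> (3::real)^n" by simp
  define m where "m = Suc (Suc n)"
  have mk: "m \<le> k" using Suc.prems m_def by simp
  note IH = Suc.IH[OF Suc_leD[OF Suc.prems]]
  have outn: "out_dim L W (Suc n) = W" using mk kL m_def unfolding out_dim_def by simp
  have inm: "in_dim W d m = W" unfolding in_dim_def m_def by simp
  have mL: "m \<in> {1..L}" using mk kL m_def by simp
  have mk': "m \<in> {1..k}" using mk m_def by simp
  show ?case
  proof (intro ballI allI impI)
    fix x i assume x: "x \<in> Omega d" and i: "i < out_dim L W (Suc (Suc n))"
    have im: "i < out_dim L W m" using i m_def by simp
    define A where "A = al n"
    define X where "X = Pq (real W) M n"
    define Bt where "Bt = be n"
    define y :: real where "y = 3^n"
    define uF where "uF = (\<lambda>l. net d W WF bF (Suc n) x l)"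
    define uG where "uG = (\<lambda>l. net d W WG bG (Suc n) x l)"
    define JF where "JF = (\<lambda>l j. jacR d W WF bF (Suc n) x l j)"
    define JG where "JG = (\<lambda>l j. jacR d W WG bG (Suc n) x l j)"
    have IHl: "\<bar>uF l\<bar> \<le> A*X \<and> \<bar>uG l\<bar> \<le> A*X \<and> (\<Sum>j<d. \<bar>JF l j\<bar>) \<le> Bt*X \<and>
       (\<Sum>j<d. \<bar>JG l j\<bar>) \<le> Bt*X \<and> \<bar>uF l - uG l\<bar> \<le> \<delta>*(A*y)*X \<and> (\<Sum>j<d. \<bar>JF l j - JG l j\<bar>) \<le> \<delta>*(2*Bt*y)*X" if l: "l < W" for l
    proof -
      have lo: "l < out_dim L W (Suc n)" using outn l by simp
      show ?thesis using IH[rule_format, OF x lo] unfolding uF_def uG_def JF_def JG_def A_def X_def Bt_def y_def by blast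
    qed
    have I1: "\<bar>uF l\<bar> \<le> A*X" if "l < W" for l using IHl[OF that, THEN conjunct1] .
    have I2: "\<bar>uG l\<bar> \<le> A*X" if "l < W" for l using IHl[OF that, THEN conjunct2, THEN conjunct1] .
    have I3: "(\<Sum>j<d. \<bar>JF l j\<bar>) \<le> Bt*X" if "l < W" for l using IHl[OF that, THEN conjunct2, THEN conjunct2, THEN conjunct1] .
    have I4: "(\<Sum>j<d. \<bar>JG l j\<bar>) \<le> Bt*X" if "l < W" for l using IHl[OF that, THEN conjunct2, THEN conjunct2, THEN conjunct2, THEN conjunct1] .
    have I5: "\<bar>uF l - uG l\<bar> \<le> \<delta>*(A*y)*X" if "l < W" for l using IHl[OF that, THEN conjunct2, THEN conjunct2, THEN conjunct2, THEN conjunct2, THEN conjunct1] .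
    have I6: "(\<Sum>j<d. \<bar>JF l j - JG l j\<bar>) \<le> \<delta>*(2*Bt*y)*X" if "l < W" for l using IHl[OF that, THEN conjunct2, THEN conjunct2, THEN conjunct2, THEN conjunct2, THEN conjunct2] .
    have wF: "\<And>l. l < W \<Longrightarrow> \<bar>WF m i l\<bar> \<le> B" using F mL im inm unfolding in_Phi_def by auto
    have wG: "\<And>l. l < W \<Longrightarrow> \<bar>WG m i l\<bar> \<le> B" using G mL im inm unfolding in_Phi_def by auto
    have cF: "\<bar>bF m i\<bar> \<le> B" using F mL im unfolding in_Phi_def by auto
    have cG: "\<bar>bG m i\<bar> \<le> B" using G mL im unfolding in_Phi_def by auto
    have wD: "\<And>l. l < W \<Longrightarrow> \<bar>WF m i l - WG m i l\<bar> \<le> \<delta>" using dW mk' im inm by auto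
    have cD: "\<bar>bF m i - bG m i\<bar> \<le> \<delta>" using db mk' im by auto
    have netF: "net d W WF bF m x i = (\<Sum>l<W. WF m i l * eta3 (uF l)) + bF m i"
      unfolding m_def uF_def by simp
    have netG: "net d W WG bG m x i = (\<Sum>l<W. WG m i l * eta3 (uG l)) + bG m i"
      unfolding m_def uG_def by simp
    have jacF: "\<And>j. jacR d W WF bF m x i j = (\<Sum>l<W. WF m i l * eta3d (uF l) * JF l j)"
      unfolding m_def uF_def JF_def by simp
    have jacG: "\<And>j. jacR d W WG bG m x i j = (\<Sum>l<W. WG m i l * eta3d (uG l) * JG l j)"
      unfolding m_def uG_def JG_def by simp
    have alS: "al (Suc n) = 2*A^3" unfolding A_def by simp
    have PS: "Pq (real W) M (Suc n) = real W*M*X^3" unfolding X_def by simp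
    have beS: "be (Suc n) = 3*A^2*Bt" unfolding A_def Bt_def by simp
    have yS: "(3::real)^(Suc n) = 3*y" unfolding y_def by simp
    have r1: "\<bar>net d W WF bF m x i\<bar> \<le> al (Suc n) * Pq (real W) M (Suc n)"
    proof -
      have "\<bar>net d W WF bF m x i\<bar> \<le> real W * (B * (A*X)^3) + B"
        unfolding netF by (rule layer_val[OF wF cF I1])
      also have "\<dots> \<le> 2*A^3 * (real W*M*X^3)"
        by (rule S1[OF W1r M1 B0 A1[folded A_def] X1[folded X_def]])
      finally show ?thesis unfolding alS PS .
    qed
    have r2: "\<bar>net d W WG bG m x i\<bar> \<le> al (Suc n) * Pq (real W) M (Suc n)"
    proof -
      have "\<bar>net d W WG bG m x i\<bar> \<le> real W * (B * (A*X)^3) + B"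
        unfolding netG by (rule layer_val[OF wG cG I2])
      also have "\<dots> \<le> 2*A^3 * (real W*M*X^3)"
        by (rule S1[OF W1r M1 B0 A1[folded A_def] X1[folded X_def]])
      finally show ?thesis unfolding alS PS .
    qed
    have r3: "(\<Sum>j<d. \<bar>jacR d W WF bF m x i j\<bar>) \<le> be (Suc n) * Pq (real W) M (Suc n)"
    proof -
      have "(\<Sum>j<d. \<bar>jacR d W WF bF m x i j\<bar>) \<le> real W * (B * (3*(A*X)^2) * (Bt*X))"
        unfolding jacF by (rule layer_jac[OF wF I1 I3])
      also have "\<dots> \<le> 3*A^2*Bt*(real W*M*X^3)"
        by (rule S2[OF W1r M1 B0 A1[folded A_def] X1[folded X_def] Bt1[folded Bt_def]])
      finally show ?thesis unfolding beS PS .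
    qed
    have r4: "(\<Sum>j<d. \<bar>jacR d W WG bG m x i j\<bar>) \<le> be (Suc n) * Pq (real W) M (Suc n)"
    proof -
      have "(\<Sum>j<d. \<bar>jacR d W WG bG m x i j\<bar>) \<le> real W * (B * (3*(A*X)^2) * (Bt*X))"
        unfolding jacG by (rule layer_jac[OF wG I2 I4])
      also have "\<dots> \<le> 3*A^2*Bt*(real W*M*X^3)"
        by (rule S2[OF W1r M1 B0 A1[folded A_def] X1[folded X_def] Bt1[folded Bt_def]])
      finally show ?thesis unfolding beS PS .
    qed
    have r5: "\<bar>net d W WF bF m x i - net d W WG bG m x i\<bar> \<le> \<delta> * (al (Suc n) * 3^(Suc n)) * Pq (real W) M (Suc n)"
    proof -
      have "\<bar>net d W WF bF m x i - net d W WG bG m x i\<bar> \<le> real W * (\<delta> * (A*X)^3 + B * (3*(A*X)^2*(\<delta>*(A*y)*X))) + \<delta>"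
        unfolding netF netG by (rule layer_diff[OF wG wD cD I1 I2 I5])
      also have "\<dots> \<le> \<delta>*((2*A^3)*(3*y))*(real W*M*X^3)"
        by (rule S3[OF W1r M1 B0 A1[folded A_def] X1[folded X_def] y1[folded y_def] dpos])
      finally show ?thesis unfolding alS PS yS .
    qed
    have r6: "(\<Sum>j<d. \<bar>jacR d W WF bF m x i j - jacR d W WG bG m x i j\<bar>) \<le> \<delta> * (2 * be (Suc n) * 3^(Suc n)) * Pq (real W) M (Suc n)"
    proof -
      have "(\<Sum>j<d. \<bar>jacR d W WF bF m x i j - jacR d W WG bG m x i j\<bar>)
          \<le> real W * (\<delta> * (3*(A*X)^2) * (Bt*X) + B * (6*(A*X)*(\<delta>*(A*y)*X)) * (Bt*X) + B * (3*(A*X)^2) * (\<delta>*(2*Bt*y)*X))"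
        unfolding jacF jacG by (rule layer_jacdiff[OF wG wD I1 I2 I5 I3 I6])
      also have "\<dots> \<le> \<delta>*(2*(3*A^2*Bt)*(3*y))*(real W*M*X^3)"
        by (rule S4[OF W1r M1 B0 A1[folded A_def] X1[folded X_def] y1[folded y_def] dpos Bt1[folded Bt_def]])
      finally show ?thesis unfolding beS PS yS .
    qed
    show "\<bar>net d W WF bF (Suc (Suc n)) x i\<bar> \<le> al (Suc n) * Pq (real W) M (Suc n) \<and>
     \<bar>net d W WG bG (Suc (Suc n)) x i\<bar> \<le> al (Suc n) * Pq (real W) M (Suc n) \<and>
     (\<Sum>j<d. \<bar>jacR d W WF bF (Suc (Suc n)) x i j\<bar>) \<le> be (Suc n) * Pq (real W) M (Suc n) \<and>
     (\<Sum>j<d. \<bar>jacR d W WG bG (Suc (Suc n)) x i j\<bar>) \<le> be (Suc n) * Pq (real W) M (Suc n) \<and>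
     \<bar>net d W WF bF (Suc (Suc n)) x i - net d W WG bG (Suc (Suc n)) x i\<bar> \<le> \<delta> * (al (Suc n) * 3^(Suc n)) * Pq (real W) M (Suc n) \<and>
     (\<Sum>j<d. \<bar>jacR d W WF bF (Suc (Suc n)) x i j - jacR d W WG bG (Suc (Suc n)) x i j\<bar>) \<le> \<delta> * (2 * be (Suc n) * 3^(Suc n)) * Pq (real W) M (Suc n)"
      using r1 r2 r3 r4 r5 r6 unfolding m_def by blast
  qed
qed



theorem mainTheorem17:
  fixes d L W S k :: nat and B \<delta> :: real
    and WF WG :: "nat \<Rightarrow> nat \<Rightarrow> nat \<Rightarrow> real" and bF bG :: "nat \<Rightarrow> nat \<Rightarrow> real"
  assumes W2: "W \<ge> 2" and Bpos: "B > 0" and dpos: "\<delta> > 0"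
    and k1: "1 \<le> k" and kL: "k \<le> L"
    and F: "in_Phi d L W S B WF bF" and G: "in_Phi d L W S B WG bG"
    and dW: "\<forall>l\<in>{1..k}. \<forall>i<out_dim L W l. \<forall>j<in_dim W d l. \<bar>WF l i j - WG l i j\<bar> \<le> \<delta>"
    and db: "\<forall>l\<in>{1..k}. \<forall>i<out_dim L W l. \<bar>bF l i - bG l i\<bar> \<le> \<delta>"
  shows "(\<forall>x\<in>Omega d.
            mat_inf_norm (out_dim L W k) d
              (\<lambda>i j. jac (net d W WF bF k) x i j - jac (net d W WG bG k) x i j)
            \<le> \<delta> * real W ^ ((3 ^ (k - 1) - 1) div 2)
                * (max B (real d)) ^ ((5 * 3 ^ (k - 1) - 1) div 2)
                * 2 ^ ((3 ^ k - 1) div 2 + 1 - k) * 3 ^ (2 * k - 2))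
       \<and> (k = L \<longrightarrow> (\<forall>x\<in>Omega d.
            \<bar>sqrt (\<Sum>j<d. (jac (net d W WF bF L) x 0 j)\<^sup>2)
               - sqrt (\<Sum>j<d. (jac (net d W WG bG L) x 0 j)\<^sup>2)\<bar>
            \<le> \<delta> * real W ^ ((3 ^ (L - 1) - 1) div 2)
                * (max B (real d)) ^ ((5 * 3 ^ (L - 1) - 1) div 2)
                * 2 ^ ((3 ^ L - 1) div 2 + 1 - L) * 3 ^ (2 * L - 2)))"
proof -
  obtain n where kn: "k = Suc n" using k1 by (cases k) auto
  define M where "M = max B (real d)"
  define RHS where "RHS = \<delta> * real W ^ ((3 ^ (k - 1) - 1) div 2)
                * M ^ ((5 * 3 ^ (k - 1) - 1) div 2)
                * 2 ^ ((3 ^ k - 1) div 2 + 1 - k) * (3::real) ^ (2 * k - 2)"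
  have M0: "0 \<le> M" using Bpos unfolding M_def by simp
  have RHS0: "0 \<le> RHS" unfolding RHS_def using dpos M0
    by (intro mult_nonneg_nonneg zero_le_power) simp_all
  have outpos: "0 < out_dim L W k" using W2 unfolding out_dim_def by simp
  have rows: "(\<Sum>j<d. \<bar>jac (net d W WF bF k) x i j - jac (net d W WG bG k) x i j\<bar>) \<le> RHS"
    if x: "x \<in> Omega d" and i: "i < out_dim L W k" for x i
  proof (cases "d = 0")
    case True
    then show ?thesis using RHS0 by simp
  next
    case False
    then have d1: "1 \<le> d" by simp
    have W1: "1 \<le> W" using W2 by simp
    have "\<forall>x\<in>Omega d. \<forall>i<out_dim L W (Suc n).
      (\<Sum>j<d. \<bar>jacR d W WF bF (Suc n) x i j - jacR d W WG bG (Suc n) x i j\<bar>) \<le> \<delta> * (2 * be n * 3^n) * Pq (real W) M n"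
      using main_ind[OF W1 Bpos dpos d1 M_def kL F G dW db, of n] kn by blast
    then have b: "(\<Sum>j<d. \<bar>jacR d W WF bF k x i j - jacR d W WG bG k x i j\<bar>) \<le> \<delta> * (2 * be n * 3^n) * Pq (real W) M n"
      using x i kn by blast
    have eq: "\<delta> * (2 * be n * 3^n) * Pq (real W) M n = RHS"
      unfolding RHS_def c_closed Pq_closed kn diff_Suc_1 by (simp only: mult_ac)
    show ?thesis using b unfolding eq jac_net .
  qed
  have part1: "\<forall>x\<in>Omega d. mat_inf_norm (out_dim L W k) d
              (\<lambda>i j. jac (net d W WF bF k) x i j - jac (net d W WG bG k) x i j) \<le> RHS"
  proof
    fix x assume x: "x \<in> Omega d"
    have ne: "(\<lambda>i. \<Sum>j<d. \<bar>jac (net d W WF bF k) x i j - jac (net d W WG bG k) x i j\<bar>) ` {..<out_dim L W k} \<noteq> {}"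
      using outpos by auto
    show "mat_inf_norm (out_dim L W k) d
              (\<lambda>i j. jac (net d W WF bF k) x i j - jac (net d W WG bG k) x i j) \<le> RHS"
      unfolding mat_inf_norm_def Max_le_iff[OF finite_imageI[OF finite_lessThan] ne]
      using rows[OF x] by blast
  qed
  have part2: "\<forall>x\<in>Omega d.
            \<bar>sqrt (\<Sum>j<d. (jac (net d W WF bF L) x 0 j)\<^sup>2)
               - sqrt (\<Sum>j<d. (jac (net d W WG bG L) x 0 j)\<^sup>2)\<bar> \<le> RHS" if kL': "k = L"
  proof
    fix x assume x: "x \<in> Omega d"
    have "\<bar>sqrt (\<Sum>j<d. (jac (net d W WF bF L) x 0 j)\<^sup>2)
               - sqrt (\<Sum>j<d. (jac (net d W WG bG L) x 0 j)\<^sup>2)\<bar>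
          \<le> (\<Sum>j<d. \<bar>jac (net d W WF bF L) x 0 j - jac (net d W WG bG L) x 0 j\<bar>)"
      by (rule l2_diff)
    also have "\<dots> \<le> RHS" using rows[OF x, of 0] outpos kL' by simp
    finally show "\<bar>sqrt (\<Sum>j<d. (jac (net d W WF bF L) x 0 j)\<^sup>2)
               - sqrt (\<Sum>j<d. (jac (net d W WG bG L) x 0 j)\<^sup>2)\<bar> \<le> RHS" .
  qed
  show ?thesis using part1 part2 unfolding RHS_def M_def by blast
qed


end
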